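(* Let $r\ge1$, $\mathbf{m}=(m_1,\ldots,m_r)\in\mathbb{N}^r$, $m=m_1+\cdots+m_r$, $\mathbf{f}\in\mathbb{C}^r$ with $(\mathbf{f})_{\mathbf{m}}\neq0$ and no $f_i$ a non-positive integer, and $a,b,c\in\mathbb{C}$ with $c\notin\{0,-1,-2,\ldots\}$. Then for $|x|<1$ $$ {}_{r+2}F_{r+1}\!\left(\begin{matrix}a,b,\mathbf{f}+\mathbf{m}\\ c,\mathbf{f}\end{matrix}\,\middle|\, x\right) =\frac{1}{(\mathbf{f})_{\mathbf{m}}}\sum_{k=0}^m(-1)^kD_k\,(b)_k\,{}_{2}F_{1}\!\left(\begin{matrix}a,b+k\\ c\end{matrix}\,\middle|\, x\right), $$ where $D_k=\sum_{j=k}^m\alpha_j\mathbf{S}_j^{(k)}=\frac{(-1)^k(\mathbf{f}-b)_{\mathbf{m}}}{k!}{}_{r+1}F_{r}\!\left(\begin{matrix}-k,1-\mathbf{f}+b\\1-\mathbf{f}+b-\mathbf{m}\end{matrix}\right)$ and $(\mathbf{f}-b-t)_{\mathbf{m}}=\sum_{j=0}^m\alpha_jt^j$.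
   Context: $(a)_k=\Gamma(a+k)/\Gamma(a)$. For vectors: $(\mathbf{f})_{\mathbf{m}}=\prod_i(f_i)_{m_i}$, $\mathbf{f}+\alpha$ and $\mathbf{f}+\mathbf{m}$ componentwise; a vector among hypergeometric parameters means its components are listed. ${}_pF_q(\mathbf{a};\mathbf{b};x)=\sum_{n\ge0}\frac{(a_1)_n\cdots(a_p)_n}{(b_1)_n\cdots(b_q)_n}\frac{x^n}{n!}$, and ${}_pF_q(\mathbf{a};\mathbf{b})$ means the value at $x=1$. $\mathbf{S}_j^{(k)}$ are Stirling numbers of the second kind. *)

theory Defs
  imports "HOL-Analysis.Analysis" "HOL-Combinatorics.Stirling"
    "HOL-Computational_Algebra.Polynomial"
begin

definition hypF :: "complex list \<Rightarrow> complex list \<Rightarrow> complex \<Rightarrow> complex" where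
  "hypF as bs x = (\<Sum>n. (\<Prod>a\<leftarrow>as. pochhammer a n) / (\<Prod>b\<leftarrow>bs. pochhammer b n)
                        * x ^ n / fact n)"

definition vpoch :: "complex list \<Rightarrow> nat list \<Rightarrow> complex" where
  "vpoch f ms = (\<Prod>i<length f. pochhammer (f ! i) (ms ! i))"

text \<open>alpha_j: coefficient of t^j in the polynomial (f - b - t)_m = prod_i (f_i - b - t)_{m_i}.\<close>
definition alpha :: "complex list \<Rightarrow> nat list \<Rightarrow> complex \<Rightarrow> nat \<Rightarrow> complex" where
  "alpha f ms b j = coeff (\<Prod>i<length f. pochhammer [: f ! i - b, -1 :] (ms ! i)) j"

definition Dcoef :: "complex list \<Rightarrow> nat list \<Rightarrow> complex \<Rightarrow> nat \<Rightarrow> complex" where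
  "Dcoef f ms b k = (\<Sum>j=k..sum_list ms. alpha f ms b j * of_nat (Stirling j k))"

end

theory Submission
  imports Defs "HOL-Computational_Algebra.Formal_Power_Series"
begin

definition ff :: "nat \<Rightarrow> complex \<Rightarrow> complex" where
  "ff k t = (-1)^k * pochhammer (-t) k"

lemma ff_0[simp]: "ff 0 t = 1" by (simp add: ff_def)

lemma ff_Suc: "ff (Suc k) t = ff k t * (t - of_nat k)"
  unfolding ff_def by (simp add: pochhammer_rec' algebra_simps)

lemma pow_Stirling: "t^j = (\<Sum>k\<le>j. of_nat (Stirling j k) * ff k t)"
proof (induction j)
  case 0 show ?case by simp
next
  case (Suc j)
  have "(\<Sum>k\<le>Suc j. of_nat (Stirling (Suc j) k) * ff k t)
      = (\<Sum>k\<le>j. of_nat (Stirling (Suc j) (Suc k)) * ff (Suc k) t)"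
    by (subst sum.atMost_Suc_shift) simp
  also have "\<dots> = (\<Sum>k\<le>j. of_nat (Suc k) * of_nat (Stirling j (Suc k)) * ff (Suc k) t)
       + (\<Sum>k\<le>j. of_nat (Stirling j k) * ff (Suc k) t)"
    by (simp add: sum.distrib algebra_simps)
  also have "(\<Sum>k\<le>j. of_nat (Suc k) * of_nat (Stirling j (Suc k)) * ff (Suc k) t)
     = (\<Sum>k\<le>Suc j. of_nat k * of_nat (Stirling j k) * ff k t)"
    by (subst sum.atMost_Suc_shift) simp
  also have "\<dots> = (\<Sum>k\<le>j. of_nat k * of_nat (Stirling j k) * ff k t)"
    by simp
  also have "(\<Sum>k\<le>j. of_nat (Stirling j k) * ff (Suc k) t)
      = (\<Sum>k\<le>j. of_nat (Stirling j k) * ff k t * (t - of_nat k))"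
    by (simp add: ff_Suc mult.assoc)
  also have "(\<Sum>k\<le>j. of_nat k * of_nat (Stirling j k) * ff k t) + \<dots>
      = (\<Sum>k\<le>j. of_nat (Stirling j k) * ff k t) * t"
    unfolding sum.distrib[symmetric] sum_distrib_right by (rule sum.cong) (auto simp: algebra_simps)
  finally have X: "(\<Sum>k\<le>Suc j. of_nat (Stirling (Suc j) k) * ff k t) = (\<Sum>k\<le>j. of_nat (Stirling j k) * ff k t) * t" .
  show ?case by (metis X Suc.IH power_Suc mult.commute)
qed

lemma pow_Stirling': "j \<le> N \<Longrightarrow> t^j = (\<Sum>k\<le>N. of_nat (Stirling j k) * ff k t)"
  by (subst pow_Stirling) (rule sum.mono_neutral_left; auto)

lemma poly_poch: "poly (pochhammer p n) t = pochhammer (poly p t) n"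
  by (induction n) (simp_all add: pochhammer_rec')

lemma degree_poch: "degree p \<le> 1 \<Longrightarrow> degree (pochhammer p n) \<le> n"
proof (induction n)
  case 0 then show ?case by simp
next
  case (Suc n)
  have "degree (p + of_nat n) \<le> 1"
    using Suc.prems by (metis degree_add_le degree_of_nat le0)
  then show ?case using Suc
    by (simp add: pochhammer_rec') (rule order.trans[OF degree_mult_le], simp)
qed

lemma main_poly:
  assumes "length ms = length f"
  shows "(\<Prod>i<length f. pochhammer (f!i - b - t) (ms!i))
        = (\<Sum>k\<le>sum_list ms. Dcoef f ms b k * ff k t)"
proof -
  define P where "P = (\<Prod>i<length f. pochhammer [: f ! i - b, -1 :] (ms ! i))"
  define m where "m = sum_list ms"
  have degP: "degree P \<le> m"
  proof -
    have "degree P \<le> (\<Sum>i<length f. degree (pochhammer [: f ! i - b, -1 :] (ms ! i)))"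
      unfolding P_def using degree_prod_sum_le[of "{..<length f}"] by (simp add: o_def)
    also have "\<dots> \<le> (\<Sum>i<length f. ms ! i)"
      by (rule sum_mono) (rule degree_poch, simp)
    also have "\<dots> = m" unfolding m_def sum_list_sum_nth using assms
      by (simp add: atLeast0LessThan)
    finally show ?thesis .
  qed
  have "(\<Prod>i<length f. pochhammer (f!i - b - t) (ms!i)) = poly P t"
    unfolding P_def by (simp add: poly_prod poly_poch)
  also have "\<dots> = (\<Sum>j\<le>m. coeff P j * t^j)"
    unfolding poly_altdef
    by (rule sum.mono_neutral_left) (use degP in \<open>auto simp: coeff_eq_0\<close>)
  also have "\<dots> = (\<Sum>j\<le>m. coeff P j * (\<Sum>k\<le>m. of_nat (Stirling j k) * ff k t))"
    by (rule sum.cong[OF refl]) (subst pow_Stirling'[of _ m], auto)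
  also have "\<dots> = (\<Sum>k\<le>m. \<Sum>j\<le>m. coeff P j * of_nat (Stirling j k) * ff k t)"
    by (simp add: sum_distrib_left mult.assoc) (rule sum.swap)
  also have "\<dots> = (\<Sum>k\<le>m. Dcoef f ms b k * ff k t)"
  proof (rule sum.cong[OF refl])
    fix k assume "k \<in> {..m}"
    have "(\<Sum>j\<le>m. coeff P j * of_nat (Stirling j k) * ff k t)
        = (\<Sum>j=k..m. coeff P j * of_nat (Stirling j k) * ff k t)"
      by (rule sum.mono_neutral_right) auto
    then show "(\<Sum>j\<le>m. coeff P j * of_nat (Stirling j k) * ff k t) = Dcoef f ms b k * ff k t"
      by (simp add: Dcoef_def alpha_def P_def m_def sum_distrib_right)
  qed
  finally show ?thesis unfolding m_def .
qed


lemma prod_list_upt_map: "prod_list (map F [0..<r]) = (\<Prod>i<r. F i)"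
  by (induction r) (auto simp: lessThan_Suc mult.commute)

lemma prod_list_map_nth: "prod_list (map h xs) = (\<Prod>i<length xs. h (xs!i))"
  by (subst prod.list_conv_set_nth) (auto simp: atLeast0LessThan intro!: prod.cong)

lemma ff_nat: "k \<le> n \<Longrightarrow> ff k (of_nat n) * fact (n - k) = fact n"
proof (induction k)
  case 0 then show ?case by simp
next
  case (Suc k)
  have e: "n - k = Suc (n - Suc k)" using Suc.prems by simp
  have "ff (Suc k) (of_nat n) * fact (n - Suc k) = ff k (of_nat n) * (of_nat (n - k) * fact (n - Suc k))"
    using Suc.prems by (simp add: ff_Suc of_nat_diff)
  also have "of_nat (n - k) * fact (n - Suc k) = (fact (n - k) :: complex)"
    using e by (metis fact_Suc)
  finally show ?case using Suc by simp
qed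

lemma ff_nat0: "n < k \<Longrightarrow> ff k (of_nat n) = 0"
  unfolding ff_def by (simp add: pochhammer_of_nat_eq_0_iff)

lemma ff_div: "ff k (of_nat n) / fact n = (if k \<le> n then 1 / fact (n - k) else 0)"
proof (cases "k \<le> n")
  case True
  have "fact n = ff k (of_nat n) * (fact (n - k) :: complex)" using ff_nat[OF True] by simp
  moreover have "ff k (of_nat n) \<noteq> 0" by (metis calculation fact_nonzero mult_zero_left)
  ultimately show ?thesis using True by (simp add: divide_simps)
qed (simp add: ff_nat0)

lemma inversion:
  fixes Pf :: "complex \<Rightarrow> complex" and D :: "nat \<Rightarrow> complex"
  assumes "\<And>t. Pf t = (\<Sum>k\<le>m. D k * ff k t)" and "k \<le> m"
  shows "D k = (\<Sum>n\<le>k. Pf (of_nat n) / fact n * (-1)^(k-n) / fact (k-n))"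
proof -
  define Ds where "Ds i = (if i \<le> m then D i else 0)" for i
  define A where "A = Abs_fps (\<lambda>n. Pf (of_nat n) / fact n)"
  have 1: "A = Abs_fps Ds * fps_exp 1"
  proof (rule fps_ext)
    fix n
    have "fps_nth A n = (\<Sum>k\<le>m. D k * (ff k (of_nat n) / fact n))"
      unfolding A_def by (simp add: assms(1) sum_divide_distrib)
    also have "\<dots> = (\<Sum>k\<in>{..m}. if k \<in> {..n} then D k / fact (n - k) else 0)"
      by (rule sum.cong) (auto simp: ff_div)
    also have "\<dots> = (\<Sum>k\<in>{..m} \<inter> {..n}. D k / fact (n - k))"
      by (rule sum.inter_restrict[symmetric]) simp
    also have "\<dots> = (\<Sum>i\<in>{0..n} \<inter> {..m}. D i / fact (n - i))"
      by (rule sum.cong) auto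
    also have "\<dots> = (\<Sum>i\<in>{0..n}. if i \<in> {..m} then D i / fact (n - i) else 0)"
      by (rule sum.inter_restrict) simp
    also have "\<dots> = fps_nth (Abs_fps Ds * fps_exp 1) n"
      by (auto simp add: fps_mult_nth Ds_def intro!: sum.cong)
    finally show "fps_nth A n = fps_nth (Abs_fps Ds * fps_exp 1) n" .
  qed
  have "A * fps_exp (-1) = Abs_fps Ds * (fps_exp 1 * fps_exp (-1))"
    by (simp add: 1 mult.assoc)
  also have "fps_exp 1 * fps_exp (-1) = (fps_exp (1 + (-1)) :: complex fps)"
    by (simp only: fps_exp_add_mult)
  finally have 2: "Abs_fps Ds = A * fps_exp (-1)" by simp
  have "D k = Ds k" using assms(2) by (simp add: Ds_def)
  also have "\<dots> = fps_nth (A * fps_exp (-1)) k" by (simp add: 2[symmetric])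
  also have "\<dots> = (\<Sum>n\<le>k. Pf (of_nat n) / fact n * (-1)^(k-n) / fact (k-n))"
    by (simp add: fps_mult_nth A_def atLeast0AtMost)
  finally show ?thesis .
qed

lemma hyp_summable:
  fixes a b c x :: complex
  assumes c: "\<forall>n::nat. c \<noteq> - of_nat n" and x: "norm x < 1"
  shows "summable (\<lambda>n. pochhammer a n * pochhammer b n / pochhammer c n * x^n / fact n)"
proof -
  define u where "u n = pochhammer a n * pochhammer b n / pochhammer c n * x^n / fact n" for n
  define r where "r n = x * ((1 + (a - c) / (c + of_nat n)) * (1 + (b - 1) / (of_nat n + 1)))" for n
  have cn: "c + of_nat n \<noteq> 0" for n
  proof
    assume "c + of_nat n = 0"
    then have "c = - of_nat n" by (simp add: eq_neg_iff_add_eq_0)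
    with c show False by blast
  qed
  have pc: "pochhammer c n \<noteq> 0" for n
    using c by (auto simp: pochhammer_eq_0_iff)
  have n1: "(of_nat n + 1 :: complex) \<noteq> 0" for n
    by (metis of_nat_Suc of_nat_eq_0_iff nat.distinct(1) add.commute)
  have rr: "r n = (a + of_nat n) * (b + of_nat n) / ((c + of_nat n) * (of_nat n + 1)) * x" for n
    using cn[of n] n1[of n] by (simp add: r_def field_simps)
  have step: "u (Suc n) = u n * r n" for n
    using cn[of n] pc[of n] n1[of n]
    by (simp add: u_def rr pochhammer_rec' field_simps)
  have inf: "filterlim (\<lambda>n. of_nat n :: complex) at_infinity sequentially"
  proof -
    have "filterlim (\<lambda>n. of_real (real n) :: complex) at_infinity sequentially"
      by (rule filterlim_compose[OF filterlim_of_real_at_infinity filterlim_real_sequentially])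
    then show ?thesis by simp
  qed
  have inf1: "filterlim (\<lambda>n. c + of_nat n :: complex) at_infinity sequentially"
    by (rule tendsto_add_filterlim_at_infinity[OF tendsto_const inf])
  have inf2: "filterlim (\<lambda>n. of_nat n + 1 :: complex) at_infinity sequentially"
    by (rule tendsto_add_filterlim_at_infinity'[OF inf tendsto_const])
  have "r \<longlonglongrightarrow> x * ((1 + 0) * (1 + 0))"
    unfolding r_def
    by (intro tendsto_intros tendsto_divide_0[OF tendsto_const inf1] tendsto_divide_0[OF tendsto_const inf2])
  then have "(\<lambda>n. norm (r n)) \<longlonglongrightarrow> norm x"
    by (simp add: tendsto_norm)
  moreover have "norm x < (1 + norm x) / 2" using x by simp
  ultimately have "eventually (\<lambda>n. norm (r n) < (1 + norm x) / 2) sequentially"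
    by (rule order_tendstoD(2))
  then obtain N where N: "\<And>n. n \<ge> N \<Longrightarrow> norm (r n) < (1 + norm x) / 2"
    by (auto simp: eventually_sequentially)
  have "summable u"
  proof (rule summable_ratio_test[of "(1 + norm x) / 2" N])
    show "(1 + norm x) / 2 < 1" using x by simp
    fix n assume "n \<ge> N"
    then have "norm (u n) * norm (r n) \<le> norm (u n) * ((1 + norm x) / 2)"
      using N[of n] by (intro mult_left_mono) auto
    then show "norm (u (Suc n)) \<le> (1 + norm x) / 2 * norm (u n)"
      by (simp add: step norm_mult mult.commute)
  qed
  then show ?thesis unfolding u_def .
qed

lemma poch_ratio:
  fixes g :: complex
  shows "pochhammer g mm * pochhammer (1 - g) n = pochhammer (g - of_nat n) mm * pochhammer (1 - g - of_nat mm) n"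
proof -
  have e1: "pochhammer (1 - g) n = (-1)^n * pochhammer (g - of_nat n) n"
    using pochhammer_minus[of "g - 1" n] by (simp add: algebra_simps)
  have e2: "pochhammer (1 - g - of_nat mm) n = (-1)^n * pochhammer (g + of_nat mm - of_nat n) n"
    using pochhammer_minus[of "g + of_nat mm - 1" n] by (simp add: algebra_simps)
  have "pochhammer g mm * pochhammer (g - of_nat n) n = pochhammer (g - of_nat n) (n + mm)"
    using pochhammer_product'[of "g - of_nat n" n mm] by (simp add: mult.commute)
  also have "\<dots> = pochhammer (g - of_nat n) mm * pochhammer (g + of_nat mm - of_nat n) n"
    using pochhammer_product'[of "g - of_nat n" mm n] by (simp add: add.commute algebra_simps)
  finally have F: "pochhammer g mm * pochhammer (g - of_nat n) n = pochhammer (g - of_nat n) mm * pochhammer (g + of_nat mm - of_nat n) n" .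
  show ?thesis unfolding e1 e2 using F by (metis mult.left_commute)
qed


theorem corollary1:
  fixes f :: "complex list" and ms :: "nat list" and a b c x :: complex
  assumes "length f \<ge> 1" and "length ms = length f"
    and "vpoch f ms \<noteq> 0"
    and "\<forall>i<length f. \<forall>n::nat. f ! i \<noteq> - of_nat n"
    and "\<forall>n::nat. c \<noteq> - of_nat n"
    and "norm x < 1"
  shows "(hypF ([a, b] @ map (\<lambda>i. f ! i + of_nat (ms ! i)) [0..<length f]) (c # f) x
           = 1 / vpoch f ms * (\<Sum>k=0..sum_list ms.
                (-1) ^ k * Dcoef f ms b k * pochhammer b k * hypF [a, b + of_nat k] [c] x))
    \<and> ((\<forall>i<length f. pochhammer (1 - f ! i + b - of_nat (ms ! i)) (sum_list ms) \<noteq> 0) \<longrightarrow>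
         (\<forall>k\<le>sum_list ms. Dcoef f ms b k =
           (-1) ^ k * vpoch (map (\<lambda>fi. fi - b) f) ms / fact k *
           hypF (- of_nat k # map (\<lambda>fi. 1 - fi + b) f)
                (map (\<lambda>i. 1 - f ! i + b - of_nat (ms ! i)) [0..<length f]) 1))"
proof -
  define r where "r = length f"
  define m where "m = sum_list ms"
  define V where "V = vpoch f ms"
  have Vdef: "V = (\<Prod>i<r. pochhammer (f!i) (ms!i))" by (simp add: V_def vpoch_def r_def)
  have V0: "V \<noteq> 0" using assms(3) V_def by simp
  have Dpoly: "\<And>t. (\<Prod>i<r. pochhammer (f!i - b - t) (ms!i)) = (\<Sum>k\<le>m. Dcoef f ms b k * ff k t)"
    using main_poly[OF assms(2)] r_def m_def by simp
  have fpos: "\<And>i n. i < r \<Longrightarrow> pochhammer (f!i) n \<noteq> 0"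
    using assms(4) by (auto simp: pochhammer_eq_0_iff r_def)
  have pc: "pochhammer c n \<noteq> 0" for n
    using assms(5) by (auto simp: pochhammer_eq_0_iff)

  define T where "T n = pochhammer a n * pochhammer b n / pochhammer c n * x^n / fact n" for n
  define Q where "Q n = (\<Prod>i<r. pochhammer (f!i + of_nat n) (ms!i))" for n
  define G where "G k n = pochhammer a n * pochhammer (b + of_nat k) n / pochhammer c n * x^n / fact n" for k n
  have sumG: "summable (G k)" for k unfolding G_def by (rule hyp_summable[OF assms(5,6)])
  have Qeq: "Q n = (\<Sum>k\<le>m. Dcoef f ms b k * ((-1)^k * pochhammer (b + of_nat n) k))" for n
  proof -
    have "Q n = (\<Prod>i<r. pochhammer (f!i - b - (-(b + of_nat n))) (ms!i))" by (simp add: Q_def)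
    also have "\<dots> = (\<Sum>k\<le>m. Dcoef f ms b k * ff k (-(b + of_nat n)))" by (rule Dpoly)
    finally show ?thesis by (simp add: ff_def add.commute)
  qed
  have lhs: "hypF ([a, b] @ map (\<lambda>i. f ! i + of_nat (ms ! i)) [0..<r]) (c # f) x = (\<Sum>n. T n * Q n / V)"
    unfolding hypF_def
  proof (rule arg_cong[where f=suminf], rule ext)
    fix n
    have R: "(\<Prod>i<r. pochhammer (f!i + of_nat (ms!i)) n) / (\<Prod>i<r. pochhammer (f!i) n) = Q n / V"
    proof -
      have "(\<Prod>i<r. pochhammer (f!i + of_nat (ms!i)) n) * V = (\<Prod>i<r. pochhammer (f!i) n) * Q n"
        unfolding Vdef Q_def prod.distrib[symmetric]
      proof (rule prod.cong[OF refl])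
        fix i
        show "pochhammer (f!i + of_nat (ms!i)) n * pochhammer (f!i) (ms!i) = pochhammer (f!i) n * pochhammer (f!i + of_nat n) (ms!i)"
          using pochhammer_product'[of "f!i" "ms!i" n] pochhammer_product'[of "f!i" n "ms!i"]
          by (simp add: add.commute mult.commute)
      qed
      moreover have "(\<Prod>i<r. pochhammer (f!i) n) \<noteq> 0" using fpos by (simp add: prod_zero_iff)
      ultimately show ?thesis using V0 by (simp add: field_simps)
    qed
    have N1: "(\<Prod>a\<leftarrow>[a, b] @ map (\<lambda>i. f ! i + of_nat (ms ! i)) [0..<r]. pochhammer a n)
        = pochhammer a n * pochhammer b n * (\<Prod>i<r. pochhammer (f!i + of_nat (ms!i)) n)"
      by (simp add: prod_list_upt_map o_def)
    have N2: "(\<Prod>b\<leftarrow>c # f. pochhammer b n) = pochhammer c n * (\<Prod>i<r. pochhammer (f!i) n)"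
      by (simp add: prod_list_map_nth r_def)
    show "(\<Prod>a\<leftarrow>[a, b] @ map (\<lambda>i. f ! i + of_nat (ms ! i)) [0..<r]. pochhammer a n) /
          (\<Prod>b\<leftarrow>c # f. pochhammer b n) * x ^ n / fact n = T n * Q n / V"
    proof -
      have "(\<Prod>a\<leftarrow>[a, b] @ map (\<lambda>i. f ! i + of_nat (ms ! i)) [0..<r]. pochhammer a n) /
          (\<Prod>b\<leftarrow>c # f. pochhammer b n) * x ^ n / fact n
        = T n * ((\<Prod>i<r. pochhammer (f!i + of_nat (ms!i)) n) / (\<Prod>i<r. pochhammer (f!i) n))"
        unfolding N1 N2 T_def by (simp add: divide_inverse mult_ac)
      then show ?thesis unfolding R by simp
    qed
  qed
  have rhs: "1 / V * (\<Sum>k=0..m. (-1)^k * Dcoef f ms b k * pochhammer b k * hypF [a, b + of_nat k] [c] x)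
      = (\<Sum>n. T n * Q n / V)"
  proof -
    have h: "hypF [a, b + of_nat k] [c] x = suminf (G k)" for k by (simp add: hypF_def G_def[abs_def])
    define C where "C k = (-1)^k * Dcoef f ms b k * pochhammer b k" for k
    have "(\<Sum>k=0..m. (-1)^k * Dcoef f ms b k * pochhammer b k * hypF [a, b + of_nat k] [c] x)
        = (\<Sum>k\<le>m. \<Sum>n. C k * G k n)"
      by (simp add: h C_def suminf_mult sumG atLeast0AtMost)
    also have "\<dots> = (\<Sum>n. \<Sum>k\<le>m. C k * G k n)"
      by (rule suminf_sum[symmetric]) (intro summable_mult sumG)
    finally have "1 / V * (\<Sum>k=0..m. (-1)^k * Dcoef f ms b k * pochhammer b k * hypF [a, b + of_nat k] [c] x)
       = 1 / V * (\<Sum>n. \<Sum>k\<le>m. C k * G k n)" by simp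
    also have "\<dots> = (\<Sum>n. 1 / V * (\<Sum>k\<le>m. C k * G k n))"
      by (rule suminf_mult[symmetric]) (intro summable_sum summable_mult sumG)
    also have "\<dots> = (\<Sum>n. T n * Q n / V)"
    proof (rule arg_cong[where f=suminf], rule ext)
      fix n
      have "(\<Sum>k\<le>m. C k * G k n) = T n * Q n"
        unfolding Qeq sum_distrib_left
      proof (rule sum.cong[OF refl])
        fix k
        have e: "pochhammer b k * pochhammer (b + of_nat k) n = pochhammer b n * pochhammer (b + of_nat n) k"
          using pochhammer_product'[of b k n] pochhammer_product'[of b n k] by (simp add: add.commute)
        have "C k * G k n = ((-1)^k * Dcoef f ms b k) * (pochhammer b k * pochhammer (b + of_nat k) n)
            * (pochhammer a n / pochhammer c n * x^n / fact n)"
          unfolding C_def G_def by (simp add: divide_inverse mult_ac)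
        also have "\<dots> = ((-1)^k * Dcoef f ms b k) * (pochhammer b n * pochhammer (b + of_nat n) k)
            * (pochhammer a n / pochhammer c n * x^n / fact n)"
          unfolding e ..
        also have "\<dots> = T n * (Dcoef f ms b k * ((-1)^k * pochhammer (b + of_nat n) k))"
          unfolding T_def by (simp add: divide_inverse mult_ac)
        finally show "C k * G k n = T n * (Dcoef f ms b k * ((-1)^k * pochhammer (b + of_nat n) k))" .
      qed
      then show "1 / V * (\<Sum>k\<le>m. C k * G k n) = T n * Q n / V" by simp
    qed
    finally show ?thesis .
  qed

  have part2: "\<forall>k\<le>m. Dcoef f ms b k =
           (-1) ^ k * vpoch (map (\<lambda>fi. fi - b) f) ms / fact k *
           hypF (- of_nat k # map (\<lambda>fi. 1 - fi + b) f)
                (map (\<lambda>i. 1 - f ! i + b - of_nat (ms ! i)) [0..<r]) 1"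
    if H: "\<forall>i<r. pochhammer (1 - f ! i + b - of_nat (ms ! i)) m \<noteq> 0"
  proof (intro allI impI)
    fix k assume k: "k \<le> m"
    define Pf where "Pf t = (\<Prod>i<r. pochhammer (f!i - b - t) (ms!i))" for t
    have inv: "Dcoef f ms b k = (\<Sum>n\<le>k. Pf (of_nat n) / fact n * (-1)^(k-n) / fact (k-n))"
      by (rule inversion[OF _ k]) (simp add: Pf_def Dpoly)
    define V' where "V' = (\<Prod>i<r. pochhammer (f!i - b) (ms!i))"
    have V'eq: "vpoch (map (\<lambda>fi. fi - b) f) ms = V'" by (simp add: vpoch_def V'_def r_def)
    define A where "A n = (\<Prod>i<r. pochhammer (1 - f!i + b) n)" for n
    define B where "B n = (\<Prod>i<r. pochhammer (1 - f!i + b - of_nat (ms!i)) n)" for n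
    define U where "U n = pochhammer (- of_nat k) n * A n / B n * 1^n / fact n" for n
    have hyp: "hypF (- of_nat k # map (\<lambda>fi. 1 - fi + b) f)
                (map (\<lambda>i. 1 - f ! i + b - of_nat (ms ! i)) [0..<r]) 1 = (\<Sum>n\<le>k. U n)"
    proof -
      have "hypF (- of_nat k # map (\<lambda>fi. 1 - fi + b) f)
                (map (\<lambda>i. 1 - f ! i + b - of_nat (ms ! i)) [0..<r]) 1 = (\<Sum>n. U n)"
        unfolding hypF_def U_def A_def B_def
        by (simp add: prod_list_map_nth prod_list_upt_map r_def o_def)
      also have "\<dots> = (\<Sum>n\<le>k. U n)"
        by (rule suminf_finite) (auto simp: U_def pochhammer_of_nat_eq_0_iff)
      finally show ?thesis .
    qed
    have key: "V' * A n / B n = Pf (of_nat n)" if "n \<le> k" for n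
    proof -
      have Bi: "pochhammer (1 - f!i + b - of_nat (ms!i)) n \<noteq> 0" if "i < r" for i
        using H that pochhammer_neq_0_mono[of _ m n] \<open>n \<le> k\<close> k by auto
      have "V' * A n = Pf (of_nat n) * B n"
        unfolding V'_def A_def B_def Pf_def prod.distrib[symmetric]
      proof (rule prod.cong[OF refl])
        fix i
        show "pochhammer (f ! i - b) (ms ! i) * pochhammer (1 - f ! i + b) n =
          pochhammer (f ! i - b - of_nat n) (ms ! i) * pochhammer (1 - f ! i + b - of_nat (ms ! i)) n"
          using poch_ratio[of "f!i - b" "ms!i" n] by (simp add: algebra_simps)
      qed
      moreover have "B n \<noteq> 0" unfolding B_def using Bi by (simp add: prod_zero_iff)
      ultimately show ?thesis by (simp add: field_simps)
    qed
    have trm: "(-1)^k * V' / fact k * U n = Pf (of_nat n) / fact n * (-1)^(k-n) / fact (k-n)"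
      if "n \<in> {..k}" for n
    proof -
      from that have nk: "n \<le> k" by simp
      have p1: "pochhammer (-of_nat k) n = (-1)^n * ff n (of_nat k)"
        by (simp add: ff_def mult.assoc[symmetric] power_add[symmetric])
      have p2: "ff n (of_nat k) / fact k = 1 / fact (k-n)"
        using ff_div[of n k] nk by simp
      have p3: "(-1::complex)^(k-n) = (-1)^k * (-1)^n"
      proof -
        have kn: "k + n = (k - n) + 2 * n" using nk by simp
        have "(-1::complex)^k * (-1)^n = (-1)^(k+n)" by (simp add: power_add)
        also have "\<dots> = (-1)^((k - n) + 2 * n)" by (simp only: kn)
        also have "\<dots> = (-1)^(k-n)" by (simp only: power_add power_mult) simp
        finally show ?thesis by simp
      qed
      have "(-1)^k * V' / fact k * U n = ((-1)^k * (-1)^n) * (ff n (of_nat k) / fact k) * (V' * A n / B n) / fact n"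
        unfolding U_def p1 by (simp add: divide_inverse mult_ac)
      also have "\<dots> = Pf (of_nat n) / fact n * (-1)^(k-n) / fact (k-n)"
        unfolding p2 key[OF nk] p3 by (simp add: divide_inverse mult_ac)
      finally show ?thesis .
    qed
    show "Dcoef f ms b k =
           (-1) ^ k * vpoch (map (\<lambda>fi. fi - b) f) ms / fact k *
           hypF (- of_nat k # map (\<lambda>fi. 1 - fi + b) f)
                (map (\<lambda>i. 1 - f ! i + b - of_nat (ms ! i)) [0..<r]) 1"
      unfolding V'eq hyp inv sum_distrib_left by (rule sum.cong[OF refl]) (metis trm)
  qed
  show ?thesis
    using lhs rhs part2 unfolding r_def m_def V_def by simp
qed

end
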